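(* Let $r\in(0,1/2)$. Consider the repetition-coding distributed delay diversity scheme described in the context, with deterministic delays whose relative delay $T_0=|\tau_2-\tau_1|$ satisfies $T_0B_w\ge1$. Put $\Delta_1=\lfloor T_0B_w\rfloor/\lceil T_0B_w\rceil\in[1/2,1]$. Then $$3-\frac{6r}{\Delta_1}\le\liminf_{\mathrm{SNR}\to\infty}-\frac{\log\Pr[I_{R\text{-}TDA}<R]}{\log\mathrm{SNR}}\le\limsup_{\mathrm{SNR}\to\infty}-\frac{\log\Pr[I_{R\text{-}TDA}<R]}{\log\mathrm{SNR}}\le 3-6r.$$ In particular, if $T_0B_w$ is a positive integer, the diversity–multiplexing tradeoff exists and equals $d_{R\text{-}TDA}(r)=3-6r$.
   Context: Network: a source $N_S$, two relays $N_{R_1},N_{R_2}$ and a destination $N_D$. The gains $\alpha_{i,j}$, $i\in\{S,R_1,R_2\}$, $j\in\{R_1,R_2,D\}$, $i\neq j$, are mutually independent zero-mean circularly symmetric complex Gaussian random variables with variances $\sigma^2_{i,j}>0$. For $\mathrm{SNR}>0$ set $\rho_0=\frac23\mathrm{SNR}$. The target rate is $R=r\log(1+\mathrm{SNR}\,\sigma^2_{S,D})$. Relay $R_k$ belongs to the decoding set $\mathcal D(s)$ iff $\frac12\log(1+\rho_0|\alpha_{S,R_k}|^2)\ge R$. Repetition-coding distributed delay diversity: successful relays retransmit the source's own codeword in phase 2, with bandwidth $B_w>0$ and delays $\tau_k$ at the destination. Conditioned on $\mathcal D(s)$, $$I_{R\text{-}TDA}=\frac{1}{2B_w}\int_{-B_w/2}^{B_w/2}\log\left(1+\rho_0|\alpha_{S,D}|^2+\rho_0\Big|\sum_{R_k\in\mathcal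 D(s)}\alpha_{R_k,D}e^{j2\pi f\tau_k}\Big|^2\right)df,$$ where an empty sum equals $0$. The probability $\Pr[I_{R\text{-}TDA}<R]$ averages over the gains, including the randomness of $\mathcal D(s)$. *)

theory Defs
  imports "HOL-Probability.Probability"
begin

datatype relay = R1 | R2

datatype link = SR1 | SR2 | SD | R1R2 | R2R1 | R1D | R2D

lemma UNIV_link: "(UNIV :: link set) = {SR1, SR2, SD, R1R2, R2R1, R1D, R2D}"
  by (auto intro: link.exhaust)

instance link :: finite
  by standard (simp add: UNIV_link)

definition src_relay :: "relay \<Rightarrow> link" where
  "src_relay k = (case k of R1 \<Rightarrow> SR1 | R2 \<Rightarrow> SR2)"

definition relay_dst :: "relay \<Rightarrow> link" where
  "relay_dst k = (case k of R1 \<Rightarrow> R1D | R2 \<Rightarrow> R2D)"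

definition cgauss_density :: "real \<Rightarrow> complex \<Rightarrow> real" where
  "cgauss_density s z = exp (- (cmod z)\<^sup>2 / s) / (pi * s)"

definition cgauss :: "real \<Rightarrow> complex measure" where
  "cgauss s = density lborel (\<lambda>z. ennreal (cgauss_density s z))"

definition gain_measure :: "(link \<Rightarrow> real) \<Rightarrow> (link \<Rightarrow> complex) measure" where
  "gain_measure \<sigma>2 = PiM UNIV (\<lambda>l. cgauss (\<sigma>2 l))"

definition rho0 :: "real \<Rightarrow> real" where
  "rho0 snr = 2 / 3 * snr"

text \<open>Target rate R = r log(1 + SNR sigma_{S,D}^2) (natural log throughout).\<close>
definition target_rate :: "real \<Rightarrow> (link \<Rightarrow> real) \<Rightarrow> real \<Rightarrow> real" where
  "target_rate r \<sigma>2 snr = r * ln (1 + snr * \<sigma>2 SD)"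

definition decoding_set ::
  "real \<Rightarrow> (link \<Rightarrow> real) \<Rightarrow> real \<Rightarrow> (link \<Rightarrow> complex) \<Rightarrow> relay set" where
  "decoding_set r \<sigma>2 snr \<alpha> =
     {k. ln (1 + rho0 snr * (cmod (\<alpha> (src_relay k)))\<^sup>2) / 2 \<ge> target_rate r \<sigma>2 snr}"

definition I_RTDA ::
  "real \<Rightarrow> (link \<Rightarrow> real) \<Rightarrow> real \<Rightarrow> (relay \<Rightarrow> real) \<Rightarrow> real \<Rightarrow> (link \<Rightarrow> complex) \<Rightarrow> real" where
  "I_RTDA r \<sigma>2 Bw \<tau> snr \<alpha> =
     1 / (2 * Bw) * integral {- Bw / 2 .. Bw / 2}
       (\<lambda>f. ln (1 + rho0 snr * (cmod (\<alpha> SD))\<^sup>2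
                 + rho0 snr * (cmod (\<Sum>k\<in>decoding_set r \<sigma>2 snr \<alpha>.
                        \<alpha> (relay_dst k) * cis (2 * pi * f * \<tau> k)))\<^sup>2))"

definition outage_prob ::
  "real \<Rightarrow> (link \<Rightarrow> real) \<Rightarrow> real \<Rightarrow> (relay \<Rightarrow> real) \<Rightarrow> real \<Rightarrow> real" where
  "outage_prob r \<sigma>2 Bw \<tau> snr =
     measure (gain_measure \<sigma>2)
       {\<alpha> \<in> space (gain_measure \<sigma>2). I_RTDA r \<sigma>2 Bw \<tau> snr \<alpha> < target_rate r \<sigma>2 snr}"

end

theory Submission
  imports Defs
begin

lemma cg_density_prod:
  assumes "s > 0"
  shows "cgauss_density s z = (\<Prod>b\<in>Basis. normal_density 0 (sqrt (s/2)) (z \<bullet> b))"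
proof -
  have B: "(Basis :: complex set) = {1, \<i>}" by (simp add: Basis_complex_def)
  have "(\<Prod>b\<in>Basis. normal_density 0 (sqrt (s/2)) (z \<bullet> b))
      = normal_density 0 (sqrt (s/2)) (Re z) * normal_density 0 (sqrt (s/2)) (Im z)"
    by (simp add: B inner_complex_def)
  also have "\<dots> = cgauss_density s z"
    using assms
    by (simp add: normal_density_def cgauss_density_def cmod_power2 exp_add[symmetric]
        real_sqrt_mult[symmetric] add_divide_distrib field_simps)
  finally show ?thesis ..
qed

lemma cg_sets[simp]: "sets (cgauss s) = sets borel"
  by (simp add: cgauss_def)

lemma cg_space[simp]: "space (cgauss s) = UNIV"
  by (simp add: cgauss_def)

lemma cg_meas[measurable]: "cgauss_density s \<in> borel_measurable borel"
  unfolding cgauss_density_def by measurable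

lemma cg_emeasure: "A \<in> sets borel \<Longrightarrow> emeasure (cgauss s) A = (\<integral>\<^sup>+z. ennreal (cgauss_density s z) * indicator A z \<partial>lborel)"
  unfolding cgauss_def by (subst emeasure_density) auto

lemma cg_prob: assumes "s > 0" shows "prob_space (cgauss s)"
proof
  have "emeasure (cgauss s) (space (cgauss s)) = (\<integral>\<^sup>+z. ennreal (cgauss_density s z) \<partial>lborel)"
    by (simp add: cg_emeasure)
  also have "\<dots> = (\<integral>\<^sup>+(z::complex). (\<Prod>b\<in>Basis. ennreal (normal_density 0 (sqrt (s/2)) (z \<bullet> b))) \<partial>lborel)"
    by (simp add: cg_density_prod[OF assms] prod_ennreal[symmetric])
  also have "\<dots> = (\<Prod>b\<in>(Basis::complex set). (\<integral>\<^sup>+x. ennreal (normal_density 0 (sqrt (s/2)) x) \<partial>lborel))"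
    by (rule nn_integral_lborel_prod) auto
  also have "\<dots> = 1"
  proof -
    have "(\<integral>\<^sup>+x. ennreal (normal_density 0 (sqrt (s/2)) x) \<partial>lborel) = 1"
      using assms by (subst nn_integral_eq_integral) auto
    then show ?thesis by simp
  qed
  finally show "emeasure (cgauss s) (space (cgauss s)) = 1" .
qed

lemma cg_box_lower:
  assumes "s > 0" "a > 0"
  shows "emeasure (cgauss s) (box (Complex (-a) (-a)) (Complex a a)) \<ge> ennreal (4 * a\<^sup>2 * exp (- 2 * a\<^sup>2 / s) / (pi * s))"
proof -
  let ?Q = "box (Complex (-a) (-a)) (Complex a a)"
  let ?c = "exp (- 2 * a\<^sup>2 / s) / (pi * s)"
  have "emeasure lborel ?Q = ennreal (4 * a\<^sup>2)"
    using assms by (subst emeasure_lborel_box) (auto simp: Basis_complex_def inner_complex_def power2_eq_square)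
  have dens: "?c \<le> cgauss_density s z" if "z \<in> ?Q" for z
  proof -
    have "\<bar>Re z\<bar> < a" "\<bar>Im z\<bar> < a" using that by (auto simp: box_def Basis_complex_def inner_complex_def)
    then have "(Re z)\<^sup>2 < a\<^sup>2" "(Im z)\<^sup>2 < a\<^sup>2"
      by (simp_all add: abs_less_iff power2_eq_square) (metis abs_less_iff abs_mult_less abs_mult_self_eq)+
    then have "(cmod z)\<^sup>2 \<le> 2 * a\<^sup>2" by (simp add: cmod_power2)
    then have "- 2 * a\<^sup>2 / s \<le> - (cmod z)\<^sup>2 / s" using assms by (simp add: divide_right_mono)
    then show ?thesis unfolding cgauss_density_def using assms by (simp add: divide_right_mono)
  qed
  have "ennreal (4 * a\<^sup>2 * ?c) = ennreal ?c * emeasure lborel ?Q"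
    using \<open>emeasure lborel ?Q = _\<close> assms by (simp add: ennreal_mult'[symmetric] mult.commute)
  also have "\<dots> = (\<integral>\<^sup>+z. ennreal ?c * indicator ?Q z \<partial>lborel)"
    by (simp add: nn_integral_cmult_indicator)
  also have "\<dots> \<le> (\<integral>\<^sup>+z. ennreal (cgauss_density s z) * indicator ?Q z \<partial>lborel)"
    using dens by (intro nn_integral_mono) (auto simp: indicator_def intro!: ennreal_leI)
  also have "\<dots> = emeasure (cgauss s) ?Q" by (simp add: cg_emeasure)
  finally show ?thesis by (simp add: mult.assoc)
qed

lemma cg_disk_upper:
  assumes "s > 0" "T \<ge> 0"
  shows "emeasure (cgauss s) {z. (cmod z)\<^sup>2 < T} \<le> ennreal (4 * T / (pi * s))"
proof -
  let ?a = "sqrt T"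
  let ?Q = "box (Complex (-?a) (-?a)) (Complex ?a ?a)"
  let ?D = "{z. (cmod z)\<^sup>2 < T}"
  have "emeasure lborel ?Q = ennreal (4 * T)"
    using assms by (subst emeasure_lborel_box) (auto simp: Basis_complex_def inner_complex_def)
  have sub: "?D \<subseteq> ?Q"
  proof
    fix z assume "z \<in> ?D"
    then have "(Re z)\<^sup>2 < T" "(Im z)\<^sup>2 < T" by (auto simp: cmod_power2 add_pos_nonneg)
      (smt (verit) zero_le_power2)+
    then have "\<bar>Re z\<bar> < ?a" "\<bar>Im z\<bar> < ?a" by (auto intro: real_less_rsqrt)
    then show "z \<in> ?Q" by (auto simp: box_def Basis_complex_def inner_complex_def)
  qed
  have dens: "cgauss_density s z \<le> 1 / (pi * s)" for z
    unfolding cgauss_density_def using assms by (simp add: divide_right_mono)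
  have Dm: "?D \<in> sets borel"
    by measurable
  have "emeasure (cgauss s) ?D = (\<integral>\<^sup>+z. ennreal (cgauss_density s z) * indicator ?D z \<partial>lborel)"
    using Dm by (simp add: cg_emeasure)
  also have "\<dots> \<le> (\<integral>\<^sup>+z. ennreal (1 / (pi * s)) * indicator ?Q z \<partial>lborel)"
    using sub dens by (intro nn_integral_mono) (auto simp: indicator_def intro!: ennreal_leI)
  also have "\<dots> = ennreal (1 / (pi * s)) * emeasure lborel ?Q"
    by (simp add: nn_integral_cmult_indicator)
  also have "\<dots> = ennreal (4 * T / (pi * s))"
    using \<open>emeasure lborel ?Q = _\<close> assms by (simp add: ennreal_mult[symmetric])
  finally show ?thesis .
qed

instance link :: countable
  by (rule countable_classI[of "\<lambda>l. case l of SR1 \<Rightarrow> 0 | SR2 \<Rightarrow> 1 | SD \<Rightarrow> 2 | R1R2 \<Rightarrow> 3 | R2R1 \<Rightarrow> 4 | R1D \<Rightarrow> 5 | R2D \<Rightarrow> (6::nat)"]) (auto split: link.splits)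

lemma G_space[simp]: "space (gain_measure \<sigma>2) = UNIV"
  by (simp add: gain_measure_def space_PiM)

lemma G_sets: "sets (gain_measure \<sigma>2) = sets (borel :: (link \<Rightarrow> complex) measure)"
proof -
  have "sets (gain_measure \<sigma>2) = sets (PiM UNIV (\<lambda>l::link. borel :: complex measure))"
    unfolding gain_measure_def by (rule sets_PiM_cong) auto
  also have "\<dots> = sets borel" by (rule sets_PiM_equal_borel)
  finally show ?thesis .
qed

lemma G_prob: "(\<And>l. \<sigma>2 l > 0) \<Longrightarrow> prob_space (gain_measure \<sigma>2)"
  unfolding gain_measure_def by (rule prob_space_PiM) (auto intro: cg_prob)

lemma G_emb:
  assumes "\<And>l. \<sigma>2 l > 0" "\<And>l. l \<in> J \<Longrightarrow> A l \<in> sets borel"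
  shows "emeasure (gain_measure \<sigma>2) {\<alpha>. \<forall>l\<in>J. \<alpha> l \<in> A l} = (\<Prod>l\<in>J. emeasure (cgauss (\<sigma>2 l)) (A l))"
proof -
  have "{\<alpha>. \<forall>l\<in>J. \<alpha> l \<in> A l} = prod_emb UNIV (\<lambda>l. cgauss (\<sigma>2 l)) J (Pi\<^sub>E J A)"
    by (auto simp: prod_emb_def space_PiM PiE_iff)
  then show ?thesis
    unfolding gain_measure_def using assms
    by (simp add: emeasure_PiM_emb cg_prob)
qed

lemma G_emb_sets:
  assumes "\<And>l. l \<in> J \<Longrightarrow> A l \<in> sets borel"
  shows "{\<alpha>. \<forall>l\<in>J. \<alpha> l \<in> A l} \<in> sets (gain_measure \<sigma>2)"
proof -
  have "{\<alpha>. \<forall>l\<in>J. \<alpha> l \<in> A l} = prod_emb UNIV (\<lambda>l. cgauss (\<sigma>2 l)) J (Pi\<^sub>E J A)"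
    by (auto simp: prod_emb_def space_PiM PiE_iff)
  then show ?thesis
    unfolding gain_measure_def using assms
    by (auto intro!: sets_PiM_I)
qed

lemma cont_coord[continuous_intros]: "continuous_on S (\<lambda>p::(link \<Rightarrow> complex) \<times> real. fst p l)"
  by (rule continuous_on_compose2[OF continuous_on_product_coordinates continuous_on_fst]) auto

lemma J_cont:
  assumes "snr \<ge> 0"
  shows "continuous_on UNIV (\<lambda>\<alpha>::link \<Rightarrow> complex. integral {a..b} (\<lambda>f. ln (1 + rho0 snr * (cmod (\<alpha> SD))\<^sup>2
                 + rho0 snr * (cmod (\<Sum>k\<in>D. \<alpha> (relay_dst k) * cis (2 * pi * f * \<tau> k)))\<^sup>2)))"
proof -
  have r: "rho0 snr \<ge> 0" using assms by (simp add: rho0_def)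
  have "continuous_on (UNIV \<times> cbox a b) (\<lambda>(\<alpha>::link \<Rightarrow> complex, f::real). ln (1 + rho0 snr * (cmod (\<alpha> SD))\<^sup>2
                 + rho0 snr * (cmod (\<Sum>k\<in>D. \<alpha> (relay_dst k) * cis (2 * pi * f * \<tau> k)))\<^sup>2))"
  proof -
    have "continuous_on (UNIV \<times> cbox a b) (\<lambda>p::(link \<Rightarrow> complex) \<times> real. ln (1 + rho0 snr * (cmod (fst p SD))\<^sup>2
                 + rho0 snr * (cmod (\<Sum>k\<in>D. fst p (relay_dst k) * cis (2 * pi * snd p * \<tau> k)))\<^sup>2))"
      using r by (intro continuous_intros) (auto, smt (verit) mult_nonneg_nonneg zero_le_power2)
    then show ?thesis by (simp add: case_prod_beta)
  qed
  then show ?thesis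
    using integral_continuous_on_param[where U=UNIV and a=a and b=b] by (simp add: cbox_interval)
qed

lemma coord_meas[measurable]: "(\<lambda>\<alpha>::link \<Rightarrow> complex. \<alpha> l) \<in> borel_measurable borel"
  by (rule borel_measurable_continuous_onI[OF continuous_on_product_coordinates])

lemma relay_UNIV: "(UNIV :: relay set) = {R1, R2}"
  using relay.exhaust by auto

lemma I_meas:
  assumes "snr \<ge> 0"
  shows "(\<lambda>\<alpha>. I_RTDA r \<sigma>2 Bw \<tau> snr \<alpha>) \<in> borel_measurable borel"
proof -
  define J where "J D \<alpha> = integral {- Bw / 2 .. Bw / 2} (\<lambda>f. ln (1 + rho0 snr * (cmod (\<alpha> SD))\<^sup>2
                 + rho0 snr * (cmod (\<Sum>k\<in>D. \<alpha> (relay_dst k) * cis (2 * pi * f * \<tau> k)))\<^sup>2))" for D \<alpha>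
  define P where "P k \<alpha> = (ln (1 + rho0 snr * (cmod (\<alpha> (src_relay k)))\<^sup>2) / 2 \<ge> target_rate r \<sigma>2 snr)" for k \<alpha>
  have Jm[measurable]: "J D \<in> borel_measurable borel" for D
    unfolding J_def by (rule borel_measurable_continuous_onI[OF J_cont[OF assms]])
  have Pm[measurable]: "Measurable.pred borel (P k)" for k
    unfolding P_def by measurable
  have ds: "decoding_set r \<sigma>2 snr \<alpha> = {k. P k \<alpha>}" for \<alpha>
    by (simp add: decoding_set_def P_def)
  have eq: "I_RTDA r \<sigma>2 Bw \<tau> snr \<alpha> = 1 / (2 * Bw) * (if P R1 \<alpha> then if P R2 \<alpha> then J {R1,R2} \<alpha> else J {R1} \<alpha>
       else if P R2 \<alpha> then J {R2} \<alpha> else J {} \<alpha>)" for \<alpha>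
  proof -
    have "{k. P k \<alpha>} = (if P R1 \<alpha> then if P R2 \<alpha> then {R1,R2} else {R1}
       else if P R2 \<alpha> then {R2} else {})"
      by (auto intro: relay.exhaust) (metis relay.exhaust)+
    then show ?thesis unfolding I_RTDA_def J_def ds by auto
  qed
  show ?thesis unfolding eq by measurable
qed

lemma O_sets:
  assumes "snr \<ge> 0"
  shows "{\<alpha> \<in> space (gain_measure \<sigma>2). I_RTDA r \<sigma>2 Bw \<tau> snr \<alpha> < target_rate r \<sigma>2 snr} \<in> sets (gain_measure \<sigma>2)"
  unfolding G_sets using I_meas[OF assms] by measurable

lemma int_ind_le:
  fixes a b c w :: real
  assumes "w \<ge> 0"
  shows "indicat_real {c - w .. c + w} integrable_on {a..b}"
    and "integral {a..b} (indicat_real {c - w .. c + w}) \<le> 2 * w"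
proof -
  have lm: "{c - w .. c + w} \<inter> {a..b} \<in> lmeasurable"
    by (intro lmeasurable_compact compact_Int) auto
  then show "indicat_real {c - w .. c + w} integrable_on {a..b}"
    by (simp add: integrable_on_indicator)
  have "integral {a..b} (indicat_real {c - w .. c + w}) = integral ({c - w .. c + w} \<inter> {a..b}) (\<lambda>_. 1::real)"
  proof -
    have "indicat_real {c - w .. c + w} = (\<lambda>x. if x \<in> {c - w .. c + w} then 1 else 0)"
      by (auto simp: indicator_def)
    then show ?thesis by (simp only: integral_restrict_Int)
  qed
  also have "\<dots> \<le> integral {c - w .. c + w} (\<lambda>_. 1::real)"
    using lm by (intro integral_subset_le) (auto intro: integrable_on_const)
  also have "\<dots> = 2 * w" using assms by simp
  finally show "integral {a..b} (indicat_real {c - w .. c + w}) \<le> 2 * w" .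
qed

lemma int_lower:
  fixes g :: "real \<Rightarrow> real" and a b L w :: real and c :: "'k \<Rightarrow> real"
  assumes gi: "g integrable_on {a..b}" and ab: "a \<le> b" and K: "finite K" and L: "L \<ge> 0" and w: "w \<ge> 0"
    and g0: "\<And>f. f \<in> {a..b} \<Longrightarrow> 0 \<le> g f"
    and gL: "\<And>f. f \<in> {a..b} \<Longrightarrow> (\<forall>k\<in>K. \<bar>f - c k\<bar> > w) \<Longrightarrow> L \<le> g f"
  shows "L * ((b - a) - card K * (2 * w)) \<le> integral {a..b} g"
proof -
  define h where "h f = L - L * (\<Sum>k\<in>K. indicat_real {c k - w .. c k + w} f)" for f
  have hi: "(\<lambda>f. \<Sum>k\<in>K. indicat_real {c k - w .. c k + w} f) integrable_on {a..b}"
    using int_ind_le(1)[OF w] by (intro integrable_sum K) auto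
  have hint: "h integrable_on {a..b}"
    unfolding h_def using hi by (intro integrable_diff integrable_on_mult_right) auto
  have "integral {a..b} h = L * (b - a) - L * (\<Sum>k\<in>K. integral {a..b} (indicat_real {c k - w .. c k + w}))"
  proof -
    have "integral {a..b} h = integral {a..b} (\<lambda>_. L) - integral {a..b} (\<lambda>f. L * (\<Sum>k\<in>K. indicat_real {c k - w .. c k + w} f))"
      unfolding h_def using hi by (intro integral_diff integrable_on_mult_right) auto
    also have "integral {a..b} (\<lambda>f. L * (\<Sum>k\<in>K. indicat_real {c k - w .. c k + w} f))
       = L * integral {a..b} (\<lambda>f. (\<Sum>k\<in>K. indicat_real {c k - w .. c k + w} f))"
      using integral_mult[OF hi, of L] by simp
    also have "integral {a..b} (\<lambda>f. (\<Sum>k\<in>K. indicat_real {c k - w .. c k + w} f))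
       = (\<Sum>k\<in>K. integral {a..b} (indicat_real {c k - w .. c k + w}))"
      using int_ind_le(1)[OF w] by (intro integral_sum K) auto
    finally show ?thesis using ab by simp
  qed
  also have "\<dots> \<ge> L * (b - a) - L * (\<Sum>k\<in>K. 2 * w)"
    using L int_ind_le(2)[OF w] by (intro diff_left_mono mult_left_mono sum_mono) auto
  finally have "L * (b - a) - L * (\<Sum>k\<in>K. 2 * w) \<le> integral {a..b} h" .
  also have "integral {a..b} h \<le> integral {a..b} g"
  proof (intro integral_le hint gi)
    fix f assume f: "f \<in> {a..b}"
    show "h f \<le> g f"
    proof (cases "\<forall>k\<in>K. \<bar>f - c k\<bar> > w")
      case True
      then have "(\<Sum>k\<in>K. indicat_real {c k - w .. c k + w} f) = 0"
        by (intro sum.neutral) (auto simp: indicator_def abs_if split: if_splits)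
      then show ?thesis using gL[OF f True] by (simp add: h_def)
    next
      case False
      then obtain k0 where k0: "k0 \<in> K" "\<bar>f - c k0\<bar> \<le> w" by auto
      then have "1 \<le> (\<Sum>k\<in>K. indicat_real {c k - w .. c k + w} f)"
        using K by (subst sum.remove[OF K k0(1)]) (auto simp: indicator_def abs_le_iff intro!: sum_nonneg)
      then have "h f \<le> 0" unfolding h_def using L
        using mult_left_mono[of 1 "(\<Sum>k\<in>K. indicat_real {c k - w .. c k + w} f)" L] by simp
      then show ?thesis using g0[OF f] by simp
    qed
  qed
  finally show ?thesis by (simp add: algebra_simps)
qed

lemma cos_far:
  fixes \<beta> \<eta> :: real
  assumes "0 \<le> \<eta>" "\<eta> \<le> pi" and far: "\<And>k::int. \<bar>\<beta> - (2 * of_int k + 1) * pi\<bar> \<ge> \<eta>"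
  shows "cos \<beta> \<ge> - cos \<eta>"
proof -
  define k where "k = \<lfloor>\<beta> / (2 * pi)\<rfloor>"
  define \<theta> where "\<theta> = \<beta> - (2 * of_int k + 1) * pi"
  have "of_int k \<le> \<beta> / (2 * pi)" "\<beta> / (2 * pi) < of_int k + 1"
    unfolding k_def by linarith+
  then have "2 * pi * of_int k \<le> \<beta>" "\<beta> < 2 * pi * (of_int k + 1)"
    using pi_gt_zero by (simp_all add: pos_le_divide_eq pos_divide_less_eq mult.commute)
  then have th: "- pi \<le> \<theta>" "\<theta> \<le> pi" unfolding \<theta>_def by (simp_all add: algebra_simps)
  have "\<beta> = \<theta> + pi + 2 * pi * of_int k" unfolding \<theta>_def by (simp add: algebra_simps)
  then have "cos \<beta> = cos (\<theta> + pi + (2 * pi) * of_int k)" by simp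
  also have "\<dots> = - cos \<theta>"
    by (simp add: cos_add sin_add)
  finally have cb: "cos \<beta> = - cos \<theta>" .
  have "\<eta> \<le> \<bar>\<theta>\<bar>" using far[of k] unfolding \<theta>_def .
  then have "cos \<bar>\<theta>\<bar> \<le> cos \<eta>"
    using th assms by (intro cos_monotone_0_pi_le) auto
  then have "cos \<theta> \<le> cos \<eta>" by (cases "\<theta> \<ge> 0") auto
  then show ?thesis using cb by simp
qed
lemma real_sum2_sq:
  fixes r1 r2 t1 t2 :: real
  shows "(r1 * cos t1 + r2 * cos t2)\<^sup>2 + (r1 * sin t1 + r2 * sin t2)\<^sup>2 = r1\<^sup>2 + r2\<^sup>2 + 2 * r1 * r2 * cos (t1 - t2)"
proof -
  have s1: "(sin t1)\<^sup>2 + (cos t1)\<^sup>2 = 1" and s2: "(sin t2)\<^sup>2 + (cos t2)\<^sup>2 = 1" by simp_all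
  show ?thesis unfolding cos_diff using s1 s2 by algebra
qed

lemma sum2_sq:
  "(cmod (h1 * cis a + h2 * cis b))\<^sup>2 =
     (cmod h1)\<^sup>2 + (cmod h2)\<^sup>2 + 2 * cmod h1 * cmod h2 * cos (Arg h1 + a - (Arg h2 + b))"
proof -
  have e1: "h1 * cis a = rcis (cmod h1) (Arg h1 + a)"
    using rcis_cmod_Arg[of h1] by (simp add: rcis_def cis_mult[symmetric] mult.assoc)
  have e2: "h2 * cis b = rcis (cmod h2) (Arg h2 + b)"
    using rcis_cmod_Arg[of h2] by (simp add: rcis_def cis_mult[symmetric] mult.assoc)
  show ?thesis
    unfolding e1 e2 
    by (subst cmod_power2) (simp only: Re_rcis Im_rcis plus_complex.sel real_sum2_sq)
qed
lemma card_int_le: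
  fixes x m :: real
  assumes "m \<ge> 0"
  shows "finite {k::int. \<bar>x + 2 * pi * of_int k\<bar> \<le> m}"
    and "real (card {k::int. \<bar>x + 2 * pi * of_int k\<bar> \<le> m}) \<le> m / pi + 1"
proof -
  define lo where "lo = (- m - x) / (2 * pi)"
  define hi where "hi = (m - x) / (2 * pi)"
  have sub: "{k::int. \<bar>x + 2 * pi * of_int k\<bar> \<le> m} \<subseteq> {\<lceil>lo\<rceil>..\<lfloor>hi\<rfloor>}"
  proof
    fix k assume "k \<in> {k::int. \<bar>x + 2 * pi * of_int k\<bar> \<le> m}"
    then have "- m - x \<le> 2 * pi * of_int k" "2 * pi * of_int k \<le> m - x" by auto
    then have "lo \<le> of_int k" "of_int k \<le> hi"
      unfolding lo_def hi_def using pi_gt_zero by (simp_all add: field_simps)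
    then show "k \<in> {\<lceil>lo\<rceil>..\<lfloor>hi\<rfloor>}" by (simp add: ceiling_le le_floor_iff)
  qed
  show "finite {k::int. \<bar>x + 2 * pi * of_int k\<bar> \<le> m}"
    using sub finite_subset by blast
  then have "card {k::int. \<bar>x + 2 * pi * of_int k\<bar> \<le> m} \<le> card {\<lceil>lo\<rceil>..\<lfloor>hi\<rfloor>}"
    using sub by (intro card_mono) auto
  also have "\<dots> = nat (\<lfloor>hi\<rfloor> - \<lceil>lo\<rceil> + 1)" by simp
  finally have c: "real (card {k::int. \<bar>x + 2 * pi * of_int k\<bar> \<le> m}) \<le> real (nat (\<lfloor>hi\<rfloor> - \<lceil>lo\<rceil> + 1))"
    by linarith
  have "hi - lo = m / pi" unfolding hi_def lo_def using pi_gt_zero by (simp add: field_simps)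
  moreover have "real (nat (\<lfloor>hi\<rfloor> - \<lceil>lo\<rceil> + 1)) \<le> max 0 (hi - lo + 1)"
  proof -
    have "real_of_int \<lfloor>hi\<rfloor> \<le> hi" "lo \<le> real_of_int \<lceil>lo\<rceil>" by simp_all
    then show ?thesis
      by (cases "\<lfloor>hi\<rfloor> - \<lceil>lo\<rceil> + 1 \<ge> 0") (simp_all add: of_nat_nat, linarith)
  qed
  ultimately show "real (card {k::int. \<bar>x + 2 * pi * of_int k\<bar> \<le> m}) \<le> m / pi + 1"
  proof -
    have "m / pi \<ge> 0" using assms pi_gt_zero by simp
    then show ?thesis using c \<open>hi - lo = m / pi\<close> \<open>real (nat _) \<le> _\<close> by linarith
  qed
qed

lemma KL:
  fixes Bw \<eta> \<rho> A t1 t2 :: real and h1 h2 :: complex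
  assumes Bw: "Bw > 0" and N1: "\<bar>t1 - t2\<bar> * Bw \<ge> 1" and \<eta>: "0 < \<eta>" "\<eta> \<le> pi / 2"
    and \<rho>: "\<rho> \<ge> 0" and A: "A \<ge> 0"
  shows "Bw * (1 - 3 * \<eta> / pi) * ln (1 + \<rho> * (1 - cos \<eta>) * ((cmod h1)\<^sup>2 + (cmod h2)\<^sup>2))
     \<le> integral {- Bw / 2 .. Bw / 2} (\<lambda>f. ln (1 + A + \<rho> * (cmod (h1 * cis (2 * pi * f * t1) + h2 * cis (2 * pi * f * t2)))\<^sup>2))"
proof -
  define \<delta> where "\<delta> = t1 - t2"
  define N where "N = \<bar>\<delta>\<bar> * Bw"
  define \<phi>0 where "\<phi>0 = Arg h1 - Arg h2"
  define \<kappa> where "\<kappa> = 1 - cos \<eta>"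
  define p where "p = (cmod h1)\<^sup>2 + (cmod h2)\<^sup>2"
  define L where "L = ln (1 + \<rho> * \<kappa> * p)"
  define w where "w = \<eta> / (2 * pi * \<bar>\<delta>\<bar>)"
  define c where "c k = (pi - \<phi>0 + 2 * pi * of_int k) / (2 * pi * \<delta>)" for k :: int
  define m where "m = 2 * pi * \<bar>\<delta>\<bar> * (Bw / 2 + w)"
  define K where "K = {k::int. \<bar>(pi - \<phi>0) + 2 * pi * of_int k\<bar> \<le> m}"
  define g where "g f = ln (1 + A + \<rho> * (cmod (h1 * cis (2 * pi * f * t1) + h2 * cis (2 * pi * f * t2)))\<^sup>2)" for f
  have N1': "N \<ge> 1" using N1 by (simp add: N_def \<delta>_def)
  have d0: "\<delta> \<noteq> 0" using N1' by (auto simp: N_def)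
  have ad: "\<bar>\<delta>\<bar> > 0" using d0 by simp
  have cos\<eta>: "0 \<le> cos \<eta>" "cos \<eta> \<le> 1" using \<eta> by (auto intro!: cos_ge_zero)
  have \<kappa>0: "0 \<le> \<kappa>" "\<kappa> \<le> 1" using cos\<eta> by (auto simp: \<kappa>_def)
  have p0: "p \<ge> 0" by (simp add: p_def)
  have L0: "L \<ge> 0" unfolding L_def using \<rho> \<kappa>0 p0 by simp
  have w0: "w \<ge> 0" unfolding w_def using \<eta> by simp
  have m0: "m \<ge> 0" unfolding m_def using w0 Bw by simp
  have Kfin: "finite K" and Kcard: "real (card K) \<le> m / pi + 1"
    unfolding K_def using card_int_le[OF m0] by auto
  have "m / pi = N + \<eta> / pi"
    unfolding m_def w_def N_def using ad by (simp add: field_simps)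
  then have Kc: "real (card K) \<le> N + 2"
    using Kcard \<eta> pi_gt_zero by (smt (verit, best) divide_le_eq_1_pos field_sum_of_halves)
  have gcont: "continuous_on {- Bw / 2 .. Bw / 2} g"
    unfolding g_def using \<rho> A
    by (intro continuous_intros) (auto, smt (verit) mult_nonneg_nonneg zero_le_power2)
  have gi: "g integrable_on {- Bw / 2 .. Bw / 2}"
    using gcont by (rule integrable_continuous_interval)
  have g0: "0 \<le> g f" for f
    unfolding g_def using \<rho> A by simp
  have gL: "L \<le> g f" if f: "f \<in> {- Bw / 2 .. Bw / 2}" and far: "\<forall>k\<in>K. \<bar>f - c k\<bar> > w" for f
  proof -
    have far2: "\<bar>f - c k\<bar> > w" for k
    proof (cases "k \<in> K")
      case True then show ?thesis using far by auto
    next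
      case False
      then have "\<bar>(pi - \<phi>0) + 2 * pi * of_int k\<bar> > m" unfolding K_def by auto
      then have "\<bar>c k\<bar> > Bw / 2 + w"
        unfolding c_def m_def using ad by (simp add: abs_divide abs_mult field_simps)
      then show ?thesis using f by auto
    qed
    define \<beta> where "\<beta> = Arg h1 + 2 * pi * f * t1 - (Arg h2 + 2 * pi * f * t2)"
    have bk: "\<beta> - (2 * of_int k + 1) * pi = 2 * pi * \<delta> * (f - c k)" for k
      unfolding \<beta>_def c_def \<phi>0_def \<delta>_def using d0 by (simp add: field_simps \<delta>_def)
    have "\<bar>\<beta> - (2 * of_int k + 1) * pi\<bar> \<ge> \<eta>" for k
    proof -
      have e1: "\<bar>\<beta> - (2 * of_int k + 1) * pi\<bar> = (2 * pi * \<bar>\<delta>\<bar>) * \<bar>f - c k\<bar>"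
        using bk[of k] by (simp add: abs_mult)
      have e2: "(2 * pi * \<bar>\<delta>\<bar>) * w \<le> (2 * pi * \<bar>\<delta>\<bar>) * \<bar>f - c k\<bar>"
        using far2[of k] ad by (intro mult_left_mono) auto
      have e3: "(2 * pi * \<bar>\<delta>\<bar>) * w = \<eta>" unfolding w_def using ad by simp
      from e1 e2 e3 show "\<eta> \<le> \<bar>\<beta> - (2 * of_int k + 1) * pi\<bar>" by linarith
    qed
    then have cb: "cos \<beta> \<ge> - cos \<eta>" using \<eta> by (intro cos_far) auto
    have sq: "(cmod (h1 * cis (2 * pi * f * t1) + h2 * cis (2 * pi * f * t2)))\<^sup>2 = p + 2 * cmod h1 * cmod h2 * cos \<beta>"
      unfolding sum2_sq p_def \<beta>_def by simp
    have q: "2 * cmod h1 * cmod h2 \<le> p"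
      unfolding p_def by (smt (verit) sum_squares_bound)
    have "2 * cmod h1 * cmod h2 * cos \<beta> \<ge> - (2 * cmod h1 * cmod h2 * cos \<eta>)"
      using mult_left_mono[OF cb, of "2 * cmod h1 * cmod h2"] by simp
    moreover have "2 * cmod h1 * cmod h2 * cos \<eta> \<le> p * cos \<eta>"
      using q cos\<eta> by (simp add: mult_right_mono)
    ultimately have "(cmod (h1 * cis (2 * pi * f * t1) + h2 * cis (2 * pi * f * t2)))\<^sup>2 \<ge> \<kappa> * p"
      unfolding sq \<kappa>_def by (simp add: algebra_simps)
    then have "\<rho> * (\<kappa> * p) \<le> \<rho> * (cmod (h1 * cis (2 * pi * f * t1) + h2 * cis (2 * pi * f * t2)))\<^sup>2"
      using \<rho> by (rule mult_left_mono)
    moreover have "0 \<le> \<rho> * (\<kappa> * p)" using \<rho> \<kappa>0 p0 by simp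
    ultimately show ?thesis unfolding L_def g_def using A
      by (subst ln_le_cancel_iff) (auto simp: mult.assoc)
  qed
  have main: "L * ((Bw / 2 - - Bw / 2) - card K * (2 * w)) \<le> integral {- Bw / 2 .. Bw / 2} g"
    by (rule int_lower[OF gi _ Kfin L0 w0, where c=c]) (use Bw g0 gL in auto)
  have "card K * (2 * w) \<le> (N + 2) * (2 * w)"
    using Kc w0 by (intro mult_right_mono) auto
  also have "\<dots> \<le> 3 * N * (2 * w)" using N1' w0 by (intro mult_right_mono) auto
  also have "\<dots> = Bw * (3 * \<eta> / pi)" unfolding N_def w_def using ad by (simp add: field_simps)
  finally have "Bw * (1 - 3 * \<eta> / pi) \<le> (Bw / 2 - - Bw / 2) - card K * (2 * w)"
    by (simp add: algebra_simps)
  then have "Bw * (1 - 3 * \<eta> / pi) * L \<le> L * ((Bw / 2 - - Bw / 2) - card K * (2 * w))"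
    using L0 by (simp add: mult_left_mono mult.commute)
  also note main
  finally show ?thesis unfolding L_def g_def \<kappa>_def p_def by (simp add: mult.assoc)
qed

definition integrand :: "real \<Rightarrow> (relay \<Rightarrow> real) \<Rightarrow> relay set \<Rightarrow> (link \<Rightarrow> complex) \<Rightarrow> real \<Rightarrow> real" where
  "integrand \<rho> \<tau> D \<alpha> f = ln (1 + \<rho> * (cmod (\<alpha> SD))\<^sup>2
                 + \<rho> * (cmod (\<Sum>k\<in>D. \<alpha> (relay_dst k) * cis (2 * pi * f * \<tau> k)))\<^sup>2)"

lemma I_RTDA_eq: "I_RTDA r \<sigma>2 Bw \<tau> snr \<alpha> = 1 / (2 * Bw) * integral {- Bw / 2 .. Bw / 2} (integrand (rho0 snr) \<tau> (decoding_set r \<sigma>2 snr \<alpha>) \<alpha>)"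
  unfolding I_RTDA_def integrand_def ..

lemma integrand_cont:
  assumes "\<rho> \<ge> 0"
  shows "continuous_on S (integrand \<rho> \<tau> D \<alpha>)"
  unfolding integrand_def using assms
  by (intro continuous_intros) (auto, smt (verit) mult_nonneg_nonneg zero_le_power2)

lemma integrand_int:
  assumes "\<rho> \<ge> 0"
  shows "integrand \<rho> \<tau> D \<alpha> integrable_on {a..b}"
  by (rule integrable_continuous_interval[OF integrand_cont[OF assms]])

lemma int_const_le:
  fixes g :: "real \<Rightarrow> real"
  assumes "g integrable_on {a..b}" "a \<le> b" "\<And>f. f \<in> {a..b} \<Longrightarrow> V \<le> g f"
  shows "(b - a) * V \<le> integral {a..b} g"
proof -
  have "integral {a..b} (\<lambda>_. V) \<le> integral {a..b} g"
    using assms by (intro integral_le) auto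
  then show ?thesis using assms by simp
qed

lemma int_le_const:
  fixes g :: "real \<Rightarrow> real"
  assumes "g integrable_on {a..b}" "a \<le> b" "\<And>f. f \<in> {a..b} \<Longrightarrow> g f \<le> V"
  shows "integral {a..b} g \<le> (b - a) * V"
proof -
  have "integral {a..b} g \<le> integral {a..b} (\<lambda>_. V)"
    using assms by (intro integral_le) auto
  then show ?thesis using assms by simp
qed

lemma ln_bound:
  fixes c y R :: real
  assumes "c > 0" "c * ln (1 + y) < 2 * R" "y \<ge> 0"
  shows "y < exp (2 * R / c) - 1"
proof -
  have "ln (1 + y) < 2 * R / c" using assms by (simp add: field_simps mult.commute)
  then have "exp (ln (1 + y)) < exp (2 * R / c)" by simp
  then show ?thesis using assms by simp
qed

lemma finite_relay[simp]: "finite (A :: relay set)"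
proof (rule finite_subset[of _ "{R1, R2}"])
  show "A \<subseteq> {R1, R2}" using relay_UNIV by blast
qed simp

lemma sum_relay_norm:
  fixes D :: "relay set"
  assumes "(cmod (\<alpha> R1D))\<^sup>2 \<le> e" "(cmod (\<alpha> R2D))\<^sup>2 \<le> e"
  shows "(cmod (\<Sum>k\<in>D. \<alpha> (relay_dst k) * cis (\<theta> k)))\<^sup>2 \<le> 4 * e"
proof -
  have e0: "e \<ge> 0" using assms(1) by (meson order.trans zero_le_power2)
  have b: "cmod (\<alpha> (relay_dst k)) \<le> sqrt e" for k
    using assms by (cases k) (auto simp: relay_dst_def intro: real_le_rsqrt)
  have "cmod (\<Sum>k\<in>D. \<alpha> (relay_dst k) * cis (\<theta> k)) \<le> (\<Sum>k\<in>D. cmod (\<alpha> (relay_dst k) * cis (\<theta> k)))"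
    by (rule norm_sum)
  also have "\<dots> = (\<Sum>k\<in>D. cmod (\<alpha> (relay_dst k)))" by (simp add: norm_mult)
  also have "\<dots> \<le> (\<Sum>k\<in>UNIV. cmod (\<alpha> (relay_dst k)))"
    by (intro sum_mono2) auto
  also have "\<dots> \<le> (\<Sum>k\<in>(UNIV::relay set). sqrt e)"
    using b by (intro sum_mono) auto
  also have "\<dots> = 2 * sqrt e" by (simp add: relay_UNIV)
  finally have "cmod (\<Sum>k\<in>D. \<alpha> (relay_dst k) * cis (\<theta> k)) \<le> 2 * sqrt e" .
  then have "(cmod (\<Sum>k\<in>D. \<alpha> (relay_dst k) * cis (\<theta> k)))\<^sup>2 \<le> (2 * sqrt e)\<^sup>2"
    by (intro power_mono) auto
  also have "\<dots> = 4 * e" using e0 by (simp add: power_mult_distrib)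
  finally show ?thesis .
qed


lemma outage_suff:
  assumes Bw: "Bw > 0" and snr: "snr \<ge> 0" and e: "e \<ge> 0"
    and x: "(cmod (\<alpha> SD))\<^sup>2 \<le> e" and h1: "(cmod (\<alpha> R1D))\<^sup>2 \<le> e" and h2: "(cmod (\<alpha> R2D))\<^sup>2 \<le> e"
    and small: "5 * rho0 snr * e < exp (2 * target_rate r \<sigma>2 snr) - 1"
  shows "I_RTDA r \<sigma>2 Bw \<tau> snr \<alpha> < target_rate r \<sigma>2 snr"
proof -
  let ?\<rho> = "rho0 snr"
  let ?R = "target_rate r \<sigma>2 snr"
  let ?D = "decoding_set r \<sigma>2 snr \<alpha>"
  define V where "V = ln (1 + 5 * ?\<rho> * e)"
  have \<rho>0: "?\<rho> \<ge> 0" using snr by (simp add: rho0_def)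
  have pw: "integrand ?\<rho> \<tau> ?D \<alpha> f \<le> V" for f
  proof -
    have s: "(cmod (\<Sum>k\<in>?D. \<alpha> (relay_dst k) * cis (2 * pi * f * \<tau> k)))\<^sup>2 \<le> 4 * e"
      by (rule sum_relay_norm[OF h1 h2])
    have "?\<rho> * (cmod (\<alpha> SD))\<^sup>2 \<le> ?\<rho> * e" using x \<rho>0 by (rule mult_left_mono)
    moreover have "?\<rho> * (cmod (\<Sum>k\<in>?D. \<alpha> (relay_dst k) * cis (2 * pi * f * \<tau> k)))\<^sup>2 \<le> ?\<rho> * (4 * e)"
      using s \<rho>0 by (rule mult_left_mono)
    moreover have "0 \<le> ?\<rho> * (cmod (\<alpha> SD))\<^sup>2 + ?\<rho> * (cmod (\<Sum>k\<in>?D. \<alpha> (relay_dst k) * cis (2 * pi * f * \<tau> k)))\<^sup>2"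
      using \<rho>0 by simp
    ultimately show ?thesis unfolding integrand_def V_def
      by (subst ln_le_cancel_iff) (auto simp: algebra_simps)
  qed
  have "integral {- Bw / 2 .. Bw / 2} (integrand ?\<rho> \<tau> ?D \<alpha>) \<le> (Bw / 2 - - Bw / 2) * V"
    using Bw pw by (intro int_le_const integrand_int[OF \<rho>0]) auto
  then have le: "I_RTDA r \<sigma>2 Bw \<tau> snr \<alpha> \<le> V / 2"
    unfolding I_RTDA_eq using Bw by (simp add: field_simps)
  have "V < ln (exp (2 * ?R))" unfolding V_def
    using small \<rho>0 e by (subst ln_less_cancel_iff) (auto intro!: add_pos_nonneg)
  then have "V < 2 * ?R" by simp
  then show ?thesis using le by simp
qed

lemma outage_nec:
  assumes Bw: "Bw > 0" and N1: "\<bar>\<tau> R1 - \<tau> R2\<bar> * Bw \<ge> 1" and snr: "snr > 0"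
    and \<eta>: "0 < \<eta>" "\<eta> \<le> pi / 2" "3 * \<eta> < pi"
    and R0: "target_rate r \<sigma>2 snr \<ge> 0"
    and out: "I_RTDA r \<sigma>2 Bw \<tau> snr \<alpha> < target_rate r \<sigma>2 snr"
    and T: "T = (exp (2 * target_rate r \<sigma>2 snr / (1 - 3 * \<eta> / pi)) - 1) / (rho0 snr * (1 - cos \<eta>))"
  shows "(cmod (\<alpha> SD))\<^sup>2 < T \<and>
    (((cmod (\<alpha> SR1))\<^sup>2 < T \<and> (cmod (\<alpha> SR2))\<^sup>2 < T) \<or>
     ((cmod (\<alpha> SR2))\<^sup>2 < T \<and> (cmod (\<alpha> R1D))\<^sup>2 < T) \<or>
     ((cmod (\<alpha> SR1))\<^sup>2 < T \<and> (cmod (\<alpha> R2D))\<^sup>2 < T) \<or>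
     ((cmod (\<alpha> R1D))\<^sup>2 < T \<and> (cmod (\<alpha> R2D))\<^sup>2 < T))"
proof -
  define \<rho> where "\<rho> = rho0 snr"
  define R where "R = target_rate r \<sigma>2 snr"
  define D where "D = decoding_set r \<sigma>2 snr \<alpha>"
  define \<theta> where "\<theta> = 3 * \<eta> / pi"
  define \<kappa> where "\<kappa> = 1 - cos \<eta>"
  define E1 where "E1 = exp (2 * R) - 1"
  define E2 where "E2 = exp (2 * R / (1 - \<theta>)) - 1"
  define J where "J = integral {- Bw / 2 .. Bw / 2} (integrand \<rho> \<tau> D \<alpha>)"
  have \<rho>0: "\<rho> > 0" using snr by (simp add: \<rho>_def rho0_def)
  have \<theta>: "0 < \<theta>" "\<theta> < 1" using \<eta> pi_gt_zero by (auto simp: \<theta>_def)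
  have \<kappa>: "0 < \<kappa>" "\<kappa> \<le> 1"
  proof -
    have "cos \<eta> < cos 0" using \<eta> by (intro cos_monotone_0_pi) auto
    then have "cos \<eta> < 1" by simp
    moreover have "0 \<le> cos \<eta>" using \<eta> by (intro cos_ge_zero) auto
    ultimately show "0 < \<kappa>" "\<kappa> \<le> 1" by (auto simp: \<kappa>_def)
  qed
  have TE: "T = E2 / (\<rho> * \<kappa>)" unfolding T E2_def R_def \<rho>_def \<kappa>_def \<theta>_def ..
  have E12: "E1 \<le> E2" unfolding E1_def E2_def using R0 \<theta>
    by (simp add: R_def divide_le_eq_1_pos le_divide_eq mult_left_le)
  have E1T: "E1 / \<rho> \<le> T"
  proof -
    have "E1 / \<rho> \<le> E2 / \<rho>" using E12 \<rho>0 by (simp add: divide_right_mono)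
    also have "\<dots> \<le> E2 / (\<rho> * \<kappa>)"
    proof -
      have "E2 \<ge> 0" unfolding E2_def using R0 \<theta> by (simp add: R_def)
      then show ?thesis using \<rho>0 \<kappa> by (intro divide_left_mono) (auto intro: mult_le_cancel_left1[THEN iffD2])
    qed
    finally show ?thesis using TE by simp
  qed
  have JR: "J < 2 * R * Bw"
    using out Bw unfolding I_RTDA_eq J_def R_def \<rho>_def D_def by (simp add: field_simps)
  have small1: "y < T" if "ln (1 + \<rho> * y) < 2 * R" "y \<ge> 0" for y
  proof -
    have "1 * ln (1 + \<rho> * y) < 2 * R" using that by simp
    then have "\<rho> * y < E1" unfolding E1_def using ln_bound[of 1 "\<rho> * y" R] \<rho>0 that by simp
    then have "y < E1 / \<rho>" using \<rho>0 by (simp add: field_simps)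
    then show ?thesis using E1T by simp
  qed
  have lowJ: "ln (1 + \<rho> * y) < 2 * R" if "\<And>f. ln (1 + \<rho> * y) \<le> integrand \<rho> \<tau> D \<alpha> f" for y
  proof -
    have "(Bw / 2 - - Bw / 2) * ln (1 + \<rho> * y) \<le> J"
      unfolding J_def using Bw that by (intro int_const_le integrand_int) (auto simp: less_imp_le[OF \<rho>0])
    then have "Bw * ln (1 + \<rho> * y) < Bw * (2 * R)" using JR by (simp add: algebra_simps)
    then show ?thesis using Bw by simp
  qed
  have mono_int: "ln (1 + \<rho> * y) \<le> integrand \<rho> \<tau> D \<alpha> f"
    if "y \<ge> 0" "\<rho> * y \<le> \<rho> * (cmod (\<alpha> SD))\<^sup>2 + \<rho> * (cmod (\<Sum>k\<in>D. \<alpha> (relay_dst k) * cis (2 * pi * f * \<tau> k)))\<^sup>2" for y f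
    unfolding integrand_def using that \<rho>0 by (subst ln_le_cancel_iff) (auto simp: add_pos_nonneg)
  have xT: "(cmod (\<alpha> SD))\<^sup>2 < T"
    using lowJ[OF mono_int] \<rho>0 by (intro small1) auto
  have notD: "(cmod (\<alpha> (src_relay k)))\<^sup>2 < T" if "k \<notin> D" for k
  proof -
    have "ln (1 + \<rho> * (cmod (\<alpha> (src_relay k)))\<^sup>2) < 2 * R"
      using that unfolding D_def decoding_set_def R_def \<rho>_def by auto
    then show ?thesis by (intro small1) auto
  qed
  have D_cases: "D = {} \<or> D = {R1} \<or> D = {R2} \<or> D = {R1, R2}"
  proof -
    have all: "k = R1 \<or> k = R2" for k using relay.exhaust by blast
    have m: "k \<in> D \<longleftrightarrow> (k = R1 \<and> R1 \<in> D) \<or> (k = R2 \<and> R2 \<in> D)" for k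
      using all[of k] by auto
    show ?thesis
    proof (cases "R1 \<in> D"; cases "R2 \<in> D")
      assume "R1 \<in> D" "R2 \<in> D" then have "D = {R1, R2}" using m by blast
      then show ?thesis by simp
    next
      assume "R1 \<in> D" "R2 \<notin> D" then have "D = {R1}" using m by blast
      then show ?thesis by simp
    next
      assume "R1 \<notin> D" "R2 \<in> D" then have "D = {R2}" using m by blast
      then show ?thesis by simp
    next
      assume "R1 \<notin> D" "R2 \<notin> D" then have "D = {}" using m by blast
      then show ?thesis by simp
    qed
  qed
  have single: "(cmod (\<alpha> (relay_dst k)))\<^sup>2 < T" if "D = {k}" for k
  proof -
    have "ln (1 + \<rho> * (cmod (\<alpha> (relay_dst k)))\<^sup>2) \<le> integrand \<rho> \<tau> D \<alpha> f" for f
      using \<rho>0 by (intro mono_int) (auto simp: that norm_mult)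
    then show ?thesis by (intro small1 lowJ) auto
  qed
  have both: "(cmod (\<alpha> R1D))\<^sup>2 < T \<and> (cmod (\<alpha> R2D))\<^sup>2 < T" if "D = {R1, R2}"
  proof -
    define p where "p = (cmod (\<alpha> R1D))\<^sup>2 + (cmod (\<alpha> R2D))\<^sup>2"
    have ig: "integrand \<rho> \<tau> D \<alpha> = (\<lambda>f. ln (1 + \<rho> * (cmod (\<alpha> SD))\<^sup>2 + \<rho> * (cmod (\<alpha> R1D * cis (2 * pi * f * \<tau> R1) + \<alpha> R2D * cis (2 * pi * f * \<tau> R2)))\<^sup>2))"
      unfolding integrand_def that by (simp add: relay_dst_def)
    have "Bw * (1 - \<theta>) * ln (1 + \<rho> * \<kappa> * p) \<le> J"
      unfolding J_def ig \<theta>_def \<kappa>_def p_def using \<rho>0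
      by (intro KL[OF Bw N1 \<eta>(1,2)]) auto
    then have "Bw * ((1 - \<theta>) * ln (1 + \<rho> * \<kappa> * p)) < Bw * (2 * R)" using JR by (simp add: algebra_simps)
    then have l: "(1 - \<theta>) * ln (1 + (\<rho> * \<kappa> * p)) < 2 * R" using Bw by simp
    have "0 \<le> \<rho> * \<kappa> * p" using \<rho>0 \<kappa> by (simp add: p_def)
    then have "\<rho> * \<kappa> * p < E2" unfolding E2_def
      using ln_bound[of "1 - \<theta>" "\<rho> * \<kappa> * p" R] l \<theta> by simp
    then have pT: "p < T" unfolding TE using \<rho>0 \<kappa> by (simp add: field_simps)
    then show ?thesis unfolding p_def by (smt (verit) zero_le_power2)
  qed
  have s1: "src_relay R1 = SR1" "src_relay R2 = SR2" "relay_dst R1 = R1D" "relay_dst R2 = R2D"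
    by (simp_all add: src_relay_def relay_dst_def)
  show ?thesis
  proof (rule conjI[OF xT])
    from D_cases show "((cmod (\<alpha> SR1))\<^sup>2 < T \<and> (cmod (\<alpha> SR2))\<^sup>2 < T) \<or>
     ((cmod (\<alpha> SR2))\<^sup>2 < T \<and> (cmod (\<alpha> R1D))\<^sup>2 < T) \<or>
     ((cmod (\<alpha> SR1))\<^sup>2 < T \<and> (cmod (\<alpha> R2D))\<^sup>2 < T) \<or>
     ((cmod (\<alpha> R1D))\<^sup>2 < T \<and> (cmod (\<alpha> R2D))\<^sup>2 < T)"
    proof (elim disjE)
      assume "D = {}" then show ?thesis using notD[of R1] notD[of R2] s1 by auto
    next
      assume d: "D = {R1}" then show ?thesis using notD[of R2] single[OF d] s1 by auto
    next
      assume d: "D = {R2}" then show ?thesis using notD[of R1] single[OF d] s1 by auto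
    next
      assume d: "D = {R1, R2}" then show ?thesis using both[OF d] by auto
    qed
  qed
qed

lemma G_emb_le:
  assumes "\<And>l. \<sigma>2 l > 0" "\<And>l. l \<in> J \<Longrightarrow> A l \<in> sets borel"
    and "\<And>l. l \<in> J \<Longrightarrow> emeasure (cgauss (\<sigma>2 l)) (A l) \<le> ennreal (b l)" "\<And>l. l \<in> J \<Longrightarrow> b l \<ge> 0"
  shows "measure (gain_measure \<sigma>2) {\<alpha>. \<forall>l\<in>J. \<alpha> l \<in> A l} \<le> (\<Prod>l\<in>J. b l)"
proof -
  interpret prob_space "gain_measure \<sigma>2" using G_prob assms(1) .
  have "ennreal (measure (gain_measure \<sigma>2) {\<alpha>. \<forall>l\<in>J. \<alpha> l \<in> A l}) = (\<Prod>l\<in>J. emeasure (cgauss (\<sigma>2 l)) (A l))"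
    using G_emb[of \<sigma>2 J A] assms by (simp add: emeasure_eq_measure)
  also have "\<dots> \<le> (\<Prod>l\<in>J. ennreal (b l))"
    using assms by (intro prod_mono_ennreal) auto
  also have "\<dots> = ennreal (\<Prod>l\<in>J. b l)" using assms by (simp add: prod_ennreal)
  finally show ?thesis using assms by (simp add: ennreal_le_iff prod_nonneg)
qed

lemma G_emb_ge:
  assumes "\<And>l. \<sigma>2 l > 0" "\<And>l. l \<in> J \<Longrightarrow> A l \<in> sets borel"
    and "\<And>l. l \<in> J \<Longrightarrow> emeasure (cgauss (\<sigma>2 l)) (A l) \<ge> ennreal (b l)" "\<And>l. l \<in> J \<Longrightarrow> b l \<ge> 0"
  shows "measure (gain_measure \<sigma>2) {\<alpha>. \<forall>l\<in>J. \<alpha> l \<in> A l} \<ge> (\<Prod>l\<in>J. b l)"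
proof -
  interpret prob_space "gain_measure \<sigma>2" using G_prob assms(1) .
  have "ennreal (\<Prod>l\<in>J. b l) = (\<Prod>l\<in>J. ennreal (b l))" using assms by (simp add: prod_ennreal)
  also have "\<dots> \<le> (\<Prod>l\<in>J. emeasure (cgauss (\<sigma>2 l)) (A l))"
    using assms by (intro prod_mono_ennreal) auto
  also have "\<dots> = ennreal (measure (gain_measure \<sigma>2) {\<alpha>. \<forall>l\<in>J. \<alpha> l \<in> A l})"
    using G_emb[of \<sigma>2 J A] assms by (simp add: emeasure_eq_measure)
  finally show ?thesis by (simp add: ennreal_le_iff)
qed


lemma P_lower:
  assumes \<sigma>: "\<And>l. \<sigma>2 l > 0" and Bw: "Bw > 0" and snr: "snr \<ge> 0" and e: "e > 0"
    and small: "5 * rho0 snr * e < exp (2 * target_rate r \<sigma>2 snr) - 1"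
  shows "(\<Prod>l\<in>{SD, R1D, R2D}. 2 * e * exp (- e / \<sigma>2 l) / (pi * \<sigma>2 l)) \<le> outage_prob r \<sigma>2 Bw \<tau> snr"
proof -
  interpret prob_space "gain_measure \<sigma>2" using G_prob \<sigma> .
  define a where "a = sqrt (e / 2)"
  have a0: "a > 0" using e by (simp add: a_def)
  have a2: "a\<^sup>2 = e / 2" using e by (simp add: a_def)
  define Q where "Q = box (Complex (-a) (-a)) (Complex a a)"
  define B where "B = {\<alpha>::link \<Rightarrow> complex. \<forall>l\<in>{SD, R1D, R2D}. \<alpha> l \<in> Q}"
  define Out where "Out = {\<alpha> \<in> space (gain_measure \<sigma>2). I_RTDA r \<sigma>2 Bw \<tau> snr \<alpha> < target_rate r \<sigma>2 snr}"
  have inQ: "(cmod z)\<^sup>2 \<le> e" if "z \<in> Q" for z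
  proof -
    have "\<bar>Re z\<bar> < a" "\<bar>Im z\<bar> < a" using that by (auto simp: Q_def box_def Basis_complex_def inner_complex_def)
    then have "(Re z)\<^sup>2 \<le> a\<^sup>2" "(Im z)\<^sup>2 \<le> a\<^sup>2"
      using a0 by (auto simp: abs_le_square_iff[symmetric])
    then show ?thesis using a2 by (simp add: cmod_power2)
  qed
  have BOut: "B \<subseteq> Out"
  proof
    fix \<alpha> assume "\<alpha> \<in> B"
    then have "(cmod (\<alpha> SD))\<^sup>2 \<le> e" "(cmod (\<alpha> R1D))\<^sup>2 \<le> e" "(cmod (\<alpha> R2D))\<^sup>2 \<le> e"
      using inQ by (auto simp: B_def)
    then show "\<alpha> \<in> Out" unfolding Out_def using outage_suff[OF Bw snr less_imp_le[OF e] _ _ _ small] by auto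
  qed
  have "(\<Prod>l\<in>{SD, R1D, R2D}. 2 * e * exp (- e / \<sigma>2 l) / (pi * \<sigma>2 l)) \<le> measure (gain_measure \<sigma>2) B"
    unfolding B_def
  proof (rule G_emb_ge[OF \<sigma>])
    fix l
    have "ennreal (4 * a\<^sup>2 * exp (- 2 * a\<^sup>2 / \<sigma>2 l) / (pi * \<sigma>2 l)) \<le> emeasure (cgauss (\<sigma>2 l)) Q"
      unfolding Q_def using cg_box_lower[OF \<sigma> a0] .
    then show "ennreal (2 * e * exp (- e / \<sigma>2 l) / (pi * \<sigma>2 l)) \<le> emeasure (cgauss (\<sigma>2 l)) Q"
      using a2 by simp
    show "0 \<le> 2 * e * exp (- e / \<sigma>2 l) / (pi * \<sigma>2 l)" using e \<sigma>[of l] by simp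
    show "Q \<in> sets borel" by (simp add: Q_def)
  qed
  also have "\<dots> \<le> measure (gain_measure \<sigma>2) Out"
    using BOut O_sets[OF snr] unfolding Out_def by (intro finite_measure_mono) auto
  finally show ?thesis unfolding outage_prob_def Out_def .
qed


lemma P_upper:
  assumes \<sigma>: "\<And>l. \<sigma>2 l > 0" and Bw: "Bw > 0" and N1: "\<bar>\<tau> R1 - \<tau> R2\<bar> * Bw \<ge> 1" and snr: "snr > 0"
    and \<eta>: "0 < \<eta>" "\<eta> \<le> pi / 2" "3 * \<eta> < pi"
    and R0: "target_rate r \<sigma>2 snr \<ge> 0"
    and T: "T = (exp (2 * target_rate r \<sigma>2 snr / (1 - 3 * \<eta> / pi)) - 1) / (rho0 snr * (1 - cos \<eta>))"
  shows "outage_prob r \<sigma>2 Bw \<tau> snr \<le>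
     (\<Prod>l\<in>{SD, SR1, SR2}. 4 * T / (pi * \<sigma>2 l)) + (\<Prod>l\<in>{SD, SR2, R1D}. 4 * T / (pi * \<sigma>2 l))
   + (\<Prod>l\<in>{SD, SR1, R2D}. 4 * T / (pi * \<sigma>2 l)) + (\<Prod>l\<in>{SD, R1D, R2D}. 4 * T / (pi * \<sigma>2 l))"
proof -
  interpret prob_space "gain_measure \<sigma>2" using G_prob \<sigma> .
  define Dk where "Dk = {z::complex. (cmod z)\<^sup>2 < T}"
  define S where "S L = {\<alpha>::link \<Rightarrow> complex. \<forall>l\<in>L. \<alpha> l \<in> Dk}" for L
  define Out where "Out = {\<alpha> \<in> space (gain_measure \<sigma>2). I_RTDA r \<sigma>2 Bw \<tau> snr \<alpha> < target_rate r \<sigma>2 snr}"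
  have T0: "T \<ge> 0"
  proof -
    have "cos \<eta> < cos 0" using \<eta> by (intro cos_monotone_0_pi) auto
    moreover have "3 * \<eta> / pi < 1" using \<eta> by simp
    moreover have "exp (2 * target_rate r \<sigma>2 snr / (1 - 3 * \<eta> / pi)) \<ge> 1"
      using R0 \<open>3 * \<eta> / pi < 1\<close> by simp
    ultimately show ?thesis unfolding T using snr by (simp add: rho0_def)
  qed
  have Dks: "Dk \<in> sets borel" unfolding Dk_def by measurable
  have Ss: "S L \<in> sets (gain_measure \<sigma>2)" for L
    unfolding S_def using Dks by (intro G_emb_sets) auto
  have Sle: "measure (gain_measure \<sigma>2) (S L) \<le> (\<Prod>l\<in>L. 4 * T / (pi * \<sigma>2 l))" for L
    unfolding S_def
  proof (rule G_emb_le[OF \<sigma>])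
    fix l
    show "emeasure (cgauss (\<sigma>2 l)) Dk \<le> ennreal (4 * T / (pi * \<sigma>2 l))"
      unfolding Dk_def using cg_disk_upper[OF \<sigma> T0] .
    show "0 \<le> 4 * T / (pi * \<sigma>2 l)" using T0 \<sigma>[of l] by simp
    show "Dk \<in> sets borel" by (rule Dks)
  qed
  have sub: "Out \<subseteq> S {SD, SR1, SR2} \<union> S {SD, SR2, R1D} \<union> S {SD, SR1, R2D} \<union> S {SD, R1D, R2D}"
  proof
    fix \<alpha> assume "\<alpha> \<in> Out"
    then have "I_RTDA r \<sigma>2 Bw \<tau> snr \<alpha> < target_rate r \<sigma>2 snr" by (simp add: Out_def)
    from outage_nec[OF Bw N1 snr \<eta> R0 this T]
    show "\<alpha> \<in> S {SD, SR1, SR2} \<union> S {SD, SR2, R1D} \<union> S {SD, SR1, R2D} \<union> S {SD, R1D, R2D}"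
      unfolding S_def Dk_def by auto
  qed
  have "measure (gain_measure \<sigma>2) Out \<le> measure (gain_measure \<sigma>2) (S {SD, SR1, SR2} \<union> S {SD, SR2, R1D} \<union> S {SD, SR1, R2D} \<union> S {SD, R1D, R2D})"
    using sub Ss by (intro finite_measure_mono) auto
  also have "\<dots> \<le> measure (gain_measure \<sigma>2) (S {SD, SR1, SR2} \<union> S {SD, SR2, R1D} \<union> S {SD, SR1, R2D}) + measure (gain_measure \<sigma>2) (S {SD, R1D, R2D})"
    using Ss by (intro measure_subadditive) auto
  also have "\<dots> \<le> measure (gain_measure \<sigma>2) (S {SD, SR1, SR2} \<union> S {SD, SR2, R1D}) + measure (gain_measure \<sigma>2) (S {SD, SR1, R2D}) + measure (gain_measure \<sigma>2) (S {SD, R1D, R2D})"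
    using Ss by (intro add_right_mono measure_subadditive) auto
  also have "\<dots> \<le> measure (gain_measure \<sigma>2) (S {SD, SR1, SR2}) + measure (gain_measure \<sigma>2) (S {SD, SR2, R1D}) + measure (gain_measure \<sigma>2) (S {SD, SR1, R2D}) + measure (gain_measure \<sigma>2) (S {SD, R1D, R2D})"
    using Ss by (intro add_right_mono measure_subadditive) auto
  also have "\<dots> \<le> (\<Prod>l\<in>{SD, SR1, SR2}. 4 * T / (pi * \<sigma>2 l)) + (\<Prod>l\<in>{SD, SR2, R1D}. 4 * T / (pi * \<sigma>2 l))
   + (\<Prod>l\<in>{SD, SR1, R2D}. 4 * T / (pi * \<sigma>2 l)) + (\<Prod>l\<in>{SD, R1D, R2D}. 4 * T / (pi * \<sigma>2 l))"
    by (intro add_mono Sle)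
  finally show ?thesis unfolding outage_prob_def Out_def .
qed

lemma ev_const_div_ln: "eventually (\<lambda>s::real. \<bar>K / ln s\<bar> \<le> \<epsilon>) at_top" if "\<epsilon> > 0"
proof -
  have "((\<lambda>s::real. K / ln s) \<longlongrightarrow> 0) at_top" by real_asymp
  then have "eventually (\<lambda>s::real. dist (K / ln s) 0 < \<epsilon>) at_top"
    using that by (rule tendstoD)
  then show ?thesis by eventually_elim (simp add: dist_real_def)
qed

lemma d_upper_from_lower:
  fixes P :: "real \<Rightarrow> real"
  assumes C: "C > 0" and ev: "eventually (\<lambda>s. C * s powr a \<le> P s) at_top" and e: "\<epsilon> > 0"
  shows "eventually (\<lambda>s. - ln (P s) / ln s \<le> - a + \<epsilon>) at_top"
  using ev ev_const_div_ln[OF e, of "ln C"] eventually_gt_at_top[of 1]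
proof eventually_elim
  case (elim s)
  have s0: "s > 0" "ln s > 0" using elim by auto
  have pos: "C * s powr a > 0" using C s0 by simp
  have "ln (C * s powr a) \<le> ln (P s)" using elim pos by (subst ln_le_cancel_iff) auto
  then have "ln C + a * ln s \<le> ln (P s)" using C s0 by (simp add: ln_mult ln_powr)
  then have "- ln (P s) \<le> (- a) * ln s - ln C" by simp
  then have "- ln (P s) / ln s \<le> ((- a) * ln s - ln C) / ln s" by (rule divide_right_mono) (use s0 in auto)
  also have "\<dots> = - a - ln C / ln s" using s0 by (simp add: field_simps)
  also have "\<dots> \<le> - a + \<epsilon>" using elim(2) unfolding abs_le_iff by linarith
  finally show ?case .
qed

lemma d_lower_from_upper:
  fixes P :: "real \<Rightarrow> real"
  assumes C: "C > 0" and ev: "eventually (\<lambda>s. 0 < P s \<and> P s \<le> C * s powr b) at_top" and e: "\<epsilon> > 0"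
  shows "eventually (\<lambda>s. - b - \<epsilon> \<le> - ln (P s) / ln s) at_top"
  using ev ev_const_div_ln[OF e, of "ln C"] eventually_gt_at_top[of 1]
proof eventually_elim
  case (elim s)
  have s0: "s > 0" "ln s > 0" using elim by auto
  have "ln (P s) \<le> ln (C * s powr b)" using elim C s0 by (subst ln_le_cancel_iff) auto
  then have "ln (P s) \<le> ln C + b * ln s" using C s0 by (simp add: ln_mult ln_powr)
  then have "(- b) * ln s - ln C \<le> - ln (P s)" by simp
  then have "((- b) * ln s - ln C) / ln s \<le> - ln (P s) / ln s" by (rule divide_right_mono) (use s0 in auto)
  moreover have "((- b) * ln s - ln C) / ln s = - b - ln C / ln s" using s0 by (simp add: field_simps)
  moreover have "- b - \<epsilon> \<le> - b - ln C / ln s" using elim(2) unfolding abs_le_iff by linarith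
  ultimately show ?case by linarith
qed

lemma exp2R: "s > 0 \<Longrightarrow> \<sigma>2 SD > 0 \<Longrightarrow> exp (c * target_rate r \<sigma>2 s) = (1 + s * \<sigma>2 SD) powr (c * r)"
proof -
  assume a: "s > 0" "\<sigma>2 SD > 0"
  then have "1 + s * \<sigma>2 SD > 0" by (simp add: add_pos_pos)
  then show ?thesis by (simp add: target_rate_def powr_def mult.assoc)
qed

lemma lower_ev:
  assumes \<sigma>: "\<And>l. \<sigma>2 l > 0" and Bw: "Bw > 0" and r: "0 < r" "r < 1/2"
  shows "\<exists>C>0. eventually (\<lambda>s. C * s powr (3 * (2 * r - 1)) \<le> outage_prob r \<sigma>2 Bw \<tau> s) at_top"
proof -
  define \<sigma> where "\<sigma> = \<sigma>2 SD"
  have \<sigma>0: "\<sigma> > 0" using \<sigma> by (simp add: \<sigma>_def)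
  define c0 where "c0 = 3 * \<sigma> powr (2 * r) / 20"
  have c00: "c0 > 0" using \<sigma>0 by (simp add: c0_def)
  define e where "e s = c0 * s powr (2 * r - 1)" for s
  define K1 where "K1 = (\<Prod>l\<in>{SD, R1D, R2D}. 2 * exp (-1) / (pi * \<sigma>2 l))"
  have K10: "K1 > 0" unfolding K1_def using \<sigma> by (intro prod_pos) auto
  have lim: "((\<lambda>s::real. s powr (2 * r - 1)) \<longlongrightarrow> 0) at_top"
    using r by (intro tendsto_neg_powr filterlim_ident) auto
  have elim: "(e \<longlongrightarrow> 0) at_top"
    unfolding e_def using tendsto_mult_right_zero[OF lim, of c0] by simp
  have eev: "eventually (\<lambda>s. e s < \<sigma>2 l) at_top" for l
    using order_tendstoD(2)[OF elim \<sigma>[of l]] .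
  have key: "c0 ^ 3 * K1 * s powr (3 * (2 * r - 1)) \<le> outage_prob r \<sigma>2 Bw \<tau> s"
    if s0: "s > 0" and s1: "s * \<sigma> \<ge> 2 powr (1 / (2 * r))" and es: "\<forall>l\<in>{SD, R1D, R2D}. e s < \<sigma>2 l" for s
  proof -
    have e0: "e s > 0" using c00 s0 by (simp add: e_def)
    have sp: "(s * \<sigma>) powr (2 * r) \<ge> 2"
    proof -
      have "(2 powr (1 / (2 * r))) powr (2 * r) \<le> (s * \<sigma>) powr (2 * r)"
        using s1 r by (intro powr_mono2) auto
      then show ?thesis using r by (simp add: powr_powr)
    qed
    have "5 * rho0 s * e s = (s * \<sigma>) powr (2 * r) / 2"
    proof -
      have "s * s powr (2 * r - 1) = s powr (2 * r)"
        using s0 by (simp add: powr_diff powr_minus)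
      then have "5 * rho0 s * e s = \<sigma> powr (2 * r) * s powr (2 * r) / 2"
        unfolding e_def c0_def rho0_def by (simp add: field_simps)
      then show ?thesis using s0 \<sigma>0 by (simp add: powr_mult)
    qed
    also have "\<dots> < exp (2 * target_rate r \<sigma>2 s) - 1"
    proof -
      have "(s * \<sigma>) powr (2 * r) < (1 + s * \<sigma>) powr (2 * r)"
        using s0 \<sigma>0 r by (intro powr_less_mono2) auto
      moreover have "exp (2 * target_rate r \<sigma>2 s) = (1 + s * \<sigma>) powr (2 * r)"
        using exp2R[of s \<sigma>2 2 r] s0 \<sigma> by (simp add: \<sigma>_def)
      ultimately show ?thesis using sp by simp
    qed
    finally have small: "5 * rho0 s * e s < exp (2 * target_rate r \<sigma>2 s) - 1" .
    have "(\<Prod>l\<in>{SD, R1D, R2D}. e s * (2 * exp (-1) / (pi * \<sigma>2 l)))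
        \<le> (\<Prod>l\<in>{SD, R1D, R2D}. 2 * e s * exp (- e s / \<sigma>2 l) / (pi * \<sigma>2 l))"
    proof (rule prod_mono)
      fix l assume l: "l \<in> {SD, R1D, R2D}"
      have "e s < \<sigma>2 l" using es l by blast
      then have "exp (-1) \<le> exp (- e s / \<sigma>2 l)" using \<sigma>[of l] by simp
      then show "0 \<le> e s * (2 * exp (-1) / (pi * \<sigma>2 l)) \<and>
          e s * (2 * exp (-1) / (pi * \<sigma>2 l)) \<le> 2 * e s * exp (- e s / \<sigma>2 l) / (pi * \<sigma>2 l)"
        using e0 \<sigma>[of l] by (auto simp: field_simps intro!: mult_left_mono)
    qed
    also have "\<dots> \<le> outage_prob r \<sigma>2 Bw \<tau> s"
      by (rule P_lower[OF \<sigma> Bw _ e0 small]) (use s0 in auto)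
    finally have f1: "(\<Prod>l\<in>{SD, R1D, R2D}. e s * (2 * exp (-1) / (pi * \<sigma>2 l))) \<le> outage_prob r \<sigma>2 Bw \<tau> s" .
    have "(\<Prod>l\<in>{SD, R1D, R2D}. e s * (2 * exp (-1) / (pi * \<sigma>2 l))) = e s ^ 3 * K1"
      unfolding K1_def prod.distrib by (simp add: power3_eq_cube)
    then have "e s ^ 3 * K1 \<le> outage_prob r \<sigma>2 Bw \<tau> s" using f1 by simp
    moreover have "e s ^ 3 = c0 ^ 3 * s powr (3 * (2 * r - 1))"
      unfolding e_def using s0 by (simp add: power_mult_distrib powr_realpow[symmetric] powr_powr mult.commute)
    ultimately show ?thesis by (simp add: mult_ac)
  qed
  have "eventually (\<lambda>s. c0 ^ 3 * K1 * s powr (3 * (2 * r - 1)) \<le> outage_prob r \<sigma>2 Bw \<tau> s) at_top"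
    using eventually_gt_at_top[of 0] eventually_ge_at_top[of "2 powr (1 / (2 * r)) / \<sigma>"] eev[of SD] eev[of R1D] eev[of R2D]
  proof eventually_elim
    case (elim s)
    then show ?case using \<sigma>0 by (intro key) (auto simp: field_simps)
  qed
  then show ?thesis using c00 K10 by (intro exI[of _ "c0 ^ 3 * K1"]) auto
qed


lemma prod3_factor:
  assumes "card L = 3" 
  shows "(\<Prod>l\<in>L. 4 * T / (pi * \<sigma>2 l)) = T ^ 3 * (\<Prod>l\<in>L. 4 / (pi * \<sigma>2 l))"
proof -
  have "(\<Prod>l\<in>L. 4 * T / (pi * \<sigma>2 l)) = (\<Prod>l\<in>L. T * (4 / (pi * \<sigma>2 l)))" by (simp add: mult.commute)
  also have "\<dots> = T ^ 3 * (\<Prod>l\<in>L. 4 / (pi * \<sigma>2 l))" using assms by (simp only: prod.distrib prod_constant)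
  finally show ?thesis .
qed

lemma upper_ev:
  assumes \<sigma>: "\<And>l. \<sigma>2 l > 0" and Bw: "Bw > 0" and N1: "\<bar>\<tau> R1 - \<tau> R2\<bar> * Bw \<ge> 1"
    and r: "0 < r" "r < 1/2" and \<epsilon>: "\<epsilon> > 0"
  shows "\<exists>C>0. eventually (\<lambda>s. outage_prob r \<sigma>2 Bw \<tau> s \<le> C * s powr (3 * (2 * r + \<epsilon> / 6 - 1))) at_top"
proof -
  define \<sigma> where "\<sigma> = \<sigma>2 SD"
  have \<sigma>0: "\<sigma> > 0" using \<sigma> by (simp add: \<sigma>_def)
  define \<theta> where "\<theta> = \<epsilon> / (12 * r + \<epsilon>)"
  define \<eta> where "\<eta> = pi * \<theta> / 3"
  define \<gamma> where "\<gamma> = 2 * r + \<epsilon> / 6"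
  define \<kappa> where "\<kappa> = 1 - cos \<eta>"
  have \<theta>: "0 < \<theta>" "\<theta> < 1" using r \<epsilon> by (auto simp: \<theta>_def)
  have \<eta>: "0 < \<eta>" "\<eta> \<le> pi / 2" "3 * \<eta> < pi" using \<theta> by (auto simp: \<eta>_def)
  have \<theta>\<eta>: "3 * \<eta> / pi = \<theta>" by (simp add: \<eta>_def)
  have \<gamma>eq: "2 / (1 - \<theta>) * r = \<gamma>"
    unfolding \<theta>_def \<gamma>_def using r \<epsilon> by (simp add: field_simps)
  have \<gamma>0: "\<gamma> > 0" using r \<epsilon> by (simp add: \<gamma>_def)
  have \<kappa>: "0 < \<kappa>"
  proof -
    have "cos \<eta> < cos 0" using \<eta> by (intro cos_monotone_0_pi) auto
    then show ?thesis by (simp add: \<kappa>_def)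
  qed
  define c3 where "c3 = 3 * (2 * \<sigma>) powr \<gamma> / (2 * \<kappa>)"
  have c30: "c3 > 0" using \<sigma>0 \<kappa> by (simp add: c3_def)
  define C2 where "C2 = (\<Prod>l\<in>{SD, SR1, SR2}. 4 / (pi * \<sigma>2 l)) + (\<Prod>l\<in>{SD, SR2, R1D}. 4 / (pi * \<sigma>2 l))
   + (\<Prod>l\<in>{SD, SR1, R2D}. 4 / (pi * \<sigma>2 l)) + (\<Prod>l\<in>{SD, R1D, R2D}. 4 / (pi * \<sigma>2 l))"
  have C20: "C2 > 0" unfolding C2_def using \<sigma> by (intro add_pos_pos prod_pos) auto
  have key: "outage_prob r \<sigma>2 Bw \<tau> s \<le> C2 * c3 ^ 3 * s powr (3 * (\<gamma> - 1))"
    if s0: "s > 0" and s1: "s * \<sigma> \<ge> 1" for s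
  proof -
    define T where "T = (exp (2 * target_rate r \<sigma>2 s / (1 - 3 * \<eta> / pi)) - 1) / (rho0 s * (1 - cos \<eta>))"
    have R0: "target_rate r \<sigma>2 s \<ge> 0"
      using s0 \<sigma>0 r by (simp add: target_rate_def \<sigma>_def)
    have ex: "exp (2 * target_rate r \<sigma>2 s / (1 - 3 * \<eta> / pi)) = (1 + s * \<sigma>) powr \<gamma>"
      using exp2R[of s \<sigma>2 "2 / (1 - \<theta>)" r] s0 \<sigma> \<gamma>eq unfolding \<theta>\<eta> by (simp add: \<sigma>_def)
    have T0: "T \<ge> 0"
    proof -
      have "(1 + s * \<sigma>) powr \<gamma> \<ge> 1" using s0 \<sigma>0 \<gamma>0 by (intro ge_one_powr_ge_zero) auto
      then show ?thesis unfolding T_def ex using s0 \<kappa> by (simp add: rho0_def \<kappa>_def[symmetric])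
    qed
    have "T \<le> (1 + s * \<sigma>) powr \<gamma> / (rho0 s * \<kappa>)"
      unfolding T_def ex \<kappa>_def[symmetric] using s0 \<kappa> by (simp add: rho0_def divide_right_mono)
    also have "\<dots> \<le> (2 * s * \<sigma>) powr \<gamma> / (rho0 s * \<kappa>)"
      using s0 s1 \<kappa> \<gamma>0 by (intro divide_right_mono powr_mono2) (auto simp: rho0_def mult.commute)
    also have "\<dots> = c3 * s powr (\<gamma> - 1)"
    proof -
      have "(2 * s * \<sigma>) powr \<gamma> = (2 * \<sigma>) powr \<gamma> * s powr \<gamma>"
        using s0 \<sigma>0 by (simp add: powr_mult[symmetric] mult_ac)
      moreover have "s powr \<gamma> = s * s powr (\<gamma> - 1)" using s0 by (simp add: powr_diff)
      ultimately show ?thesis unfolding c3_def rho0_def using s0 \<kappa> by (simp add: field_simps)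
    qed
    finally have Tle: "T \<le> c3 * s powr (\<gamma> - 1)" .
    have "outage_prob r \<sigma>2 Bw \<tau> s \<le> T ^ 3 * C2"
      using P_upper[OF \<sigma> Bw N1 s0 \<eta> R0 T_def] unfolding C2_def
      by (simp add: prod3_factor distrib_left)
    also have "\<dots> \<le> (c3 * s powr (\<gamma> - 1)) ^ 3 * C2"
      using T0 Tle C20 by (intro mult_right_mono power_mono) auto
    also have "\<dots> = C2 * c3 ^ 3 * s powr (3 * (\<gamma> - 1))"
      using s0 by (simp add: power_mult_distrib powr_realpow[symmetric] powr_powr mult_ac)
    finally show ?thesis .
  qed
  have "eventually (\<lambda>s. outage_prob r \<sigma>2 Bw \<tau> s \<le> C2 * c3 ^ 3 * s powr (3 * (\<gamma> - 1))) at_top"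
    using eventually_gt_at_top[of 0] eventually_ge_at_top[of "1 / \<sigma>"]
  proof eventually_elim
    case (elim s)
    then show ?case using \<sigma>0 by (intro key) (auto simp: field_simps)
  qed
  then show ?thesis using C20 c30 unfolding \<gamma>_def by (intro exI[of _ "C2 * c3 ^ 3"]) auto
qed

lemma delta1_range:
  fixes x :: real
  assumes "x \<ge> 1"
  shows "real_of_int \<lfloor>x\<rfloor> / real_of_int \<lceil>x\<rceil> \<in> {1/2 .. 1}"
proof -
  have "(1::int) \<le> \<lfloor>x\<rfloor>" using assms by (simp add: le_floor_iff)
  then have f1: "real_of_int \<lfloor>x\<rfloor> \<ge> 1" by simp
  have "\<lceil>x\<rceil> \<le> \<lfloor>x\<rfloor> + 1" by (simp add: ceiling_le_iff)
  then have c: "real_of_int \<lceil>x\<rceil> \<le> real_of_int \<lfloor>x\<rfloor> + 1" by linarith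
  have fc: "real_of_int \<lfloor>x\<rfloor> \<le> real_of_int \<lceil>x\<rceil>" by (simp add: floor_le_ceiling)
  have cpos: "real_of_int \<lceil>x\<rceil> > 0" using f1 fc by linarith
  have "real_of_int \<lceil>x\<rceil> \<le> 2 * real_of_int \<lfloor>x\<rfloor>" using f1 c by linarith
  then have "1/2 \<le> real_of_int \<lfloor>x\<rfloor> / real_of_int \<lceil>x\<rceil>"
    using cpos by (simp add: field_simps)
  moreover have "real_of_int \<lfloor>x\<rfloor> / real_of_int \<lceil>x\<rceil> \<le> 1"
    using fc cpos by (simp add: field_simps)
  ultimately show ?thesis by simp
qed

theorem theorem4:
  fixes r Bw :: real and \<sigma>2 :: "link \<Rightarrow> real" and \<tau> :: "relay \<Rightarrow> real"
  assumes "0 < r" and "r < 1 / 2"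
    and "\<forall>l. 0 < \<sigma>2 l"
    and "0 < Bw"
    and "\<bar>\<tau> R2 - \<tau> R1\<bar> * Bw \<ge> 1"
  shows "(let T0 = \<bar>\<tau> R2 - \<tau> R1\<bar>;
              \<Delta>1 = real_of_int \<lfloor>T0 * Bw\<rfloor> / real_of_int \<lceil>T0 * Bw\<rceil>;
              d = (\<lambda>snr. - ln (outage_prob r \<sigma>2 Bw \<tau> snr) / ln snr)
          in \<Delta>1 \<in> {1/2 .. 1}
             \<and> ereal (3 - 6 * r / \<Delta>1) \<le> Liminf at_top (\<lambda>snr. ereal (d snr))
             \<and> Liminf at_top (\<lambda>snr. ereal (d snr)) \<le> Limsup at_top (\<lambda>snr. ereal (d snr))
             \<and> Limsup at_top (\<lambda>snr. ereal (d snr)) \<le> ereal (3 - 6 * r)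
             \<and> (T0 * Bw \<in> \<int> \<longrightarrow> (d \<longlongrightarrow> 3 - 6 * r) at_top))"
proof -
  have \<sigma>: "\<And>l. 0 < \<sigma>2 l" using assms(3) by auto
  have Bw: "Bw > 0" using assms(4) .
  have r: "0 < r" "r < 1/2" using assms(1,2) .
  have N1: "\<bar>\<tau> R1 - \<tau> R2\<bar> * Bw \<ge> 1" using assms(5) by (simp add: abs_minus_commute)
  define P where "P s = outage_prob r \<sigma>2 Bw \<tau> s" for s
  define d where "d s = - ln (P s) / ln s" for s
  have "\<exists>C>0. eventually (\<lambda>s. C * s powr (3 * (2 * r - 1)) \<le> outage_prob r \<sigma>2 Bw \<tau> s) at_top"
    by (rule lower_ev[OF \<sigma> Bw r])
  then obtain C1 where C1: "C1 > 0" and ev1: "eventually (\<lambda>s. C1 * s powr (3 * (2 * r - 1)) \<le> P s) at_top"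
    unfolding P_def by auto
  have U: "eventually (\<lambda>s. d s \<le> 3 - 6 * r + e) at_top" if e: "e > 0" for e
    using d_upper_from_lower[OF C1 ev1 e] unfolding d_def by (simp add: algebra_simps)
  have Ppos: "eventually (\<lambda>s. 0 < P s) at_top"
    using ev1 eventually_gt_at_top[of 0]
  proof eventually_elim
    case (elim s)
    have "0 < C1 * s powr (3 * (2 * r - 1))" using C1 elim(2) by simp
    then show ?case using elim(1) by linarith
  qed
  have L: "eventually (\<lambda>s. 3 - 6 * r - e \<le> d s) at_top" if e: "e > 0" for e
  proof -
    have "\<exists>C>0. eventually (\<lambda>s. outage_prob r \<sigma>2 Bw \<tau> s \<le> C * s powr (3 * (2 * r + e / 6 - 1))) at_top"
      by (rule upper_ev[OF \<sigma> Bw N1 r e])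
    then obtain C2 where C2: "C2 > 0"
      and ev2: "eventually (\<lambda>s. P s \<le> C2 * s powr (3 * (2 * r + e / 6 - 1))) at_top"
      unfolding P_def by auto
    have "eventually (\<lambda>s. 0 < P s \<and> P s \<le> C2 * s powr (3 * (2 * r + e / 6 - 1))) at_top"
      using Ppos ev2 by eventually_elim auto
    from d_lower_from_upper[OF C2 this, of "e / 2"] e
    show ?thesis unfolding d_def by (simp add: algebra_simps)
  qed
  have lim: "(d \<longlongrightarrow> 3 - 6 * r) at_top"
  proof (rule tendstoI)
    fix e :: real assume e: "e > 0"
    show "eventually (\<lambda>s. dist (d s) (3 - 6 * r) < e) at_top"
    proof -
      have e2: "e / 2 > 0" using e by simp
      show ?thesis using U[OF e2] L[OF e2]
    proof eventually_elim
      case (elim s) then show ?case using e by (simp add: dist_real_def abs_less_iff)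
    qed
  qed
  qed
  then have limE: "((\<lambda>s. ereal (d s)) \<longlongrightarrow> ereal (3 - 6 * r)) at_top"
    by (rule tendsto_ereal)
  have Li: "Liminf at_top (\<lambda>s. ereal (d s)) = ereal (3 - 6 * r)"
    by (rule lim_imp_Liminf[OF _ limE]) simp
  have Ls: "Limsup at_top (\<lambda>s. ereal (d s)) = ereal (3 - 6 * r)"
    by (rule lim_imp_Limsup[OF _ limE]) simp
  define x where "x = \<bar>\<tau> R2 - \<tau> R1\<bar> * Bw"
  have x1: "x \<ge> 1" using assms(5) by (simp add: x_def)
  define \<Delta> where "\<Delta> = real_of_int \<lfloor>x\<rfloor> / real_of_int \<lceil>x\<rceil>"
  have \<Delta>: "\<Delta> \<in> {1/2 .. 1}" unfolding \<Delta>_def by (rule delta1_range[OF x1])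
  have "6 * r \<le> 6 * r / \<Delta>" using \<Delta> r by (simp add: le_divide_eq)
  then have low: "ereal (3 - 6 * r / \<Delta>) \<le> ereal (3 - 6 * r)" by simp
  have d_eq: "d = (\<lambda>snr. - ln (outage_prob r \<sigma>2 Bw \<tau> snr) / ln snr)"
    by (simp add: d_def P_def fun_eq_iff)
  have "\<Delta> \<in> {1/2 .. 1} \<and> ereal (3 - 6 * r / \<Delta>) \<le> Liminf at_top (\<lambda>snr. ereal (d snr))
             \<and> Liminf at_top (\<lambda>snr. ereal (d snr)) \<le> Limsup at_top (\<lambda>snr. ereal (d snr))
             \<and> Limsup at_top (\<lambda>snr. ereal (d snr)) \<le> ereal (3 - 6 * r)
             \<and> (x \<in> \<int> \<longrightarrow> (d \<longlongrightarrow> 3 - 6 * r) at_top)"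
    unfolding Li Ls using \<Delta> low lim by simp
  then show ?thesis
    unfolding Let_def d_eq[symmetric] \<Delta>_def[symmetric] x_def[symmetric] .
qed

end
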